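(* Let $f$ satisfy the hypotheses of Theorem 1 (bounded below by $f^*$, smooth with constants $L_1,\dots,L_d$, $\bar L=\frac1d\sum_iL_i$), and suppose that at every $x$ the estimator $\hat g(x)$ is unbiased and each coordinate $\hat g_i(x)$ has a unimodal distribution symmetric about $g_i(x)$ with variance $\sigma_i^2(x)$. Run signSGD $x_{k+1}=x_k-\gamma\,\mathrm{sign}\,\hat g(x_k)$ for $K\ge1$ iterations with constant step $\gamma=\sqrt{\frac{2(f(x_0)-f^* )}{d\bar LK}}$ (assume $f(x_0)>f^*$). Writing $g_k=\nabla f(x_k)$, $\sigma_i=\sigma_i(x_k)$ and $H_k=\{i:\sigma_i<\frac{\sqrt3}{2}|g_{k,i}|\}$, one has $$\frac1K\sum_{k=0}^{K-1}\mathbb{E}\left[\sum_{i\in H_k}|g_{k,i}|+\sum_{i\notin H_k}\frac{g_{k,i}^2}{\sigma_i}\right]\le5\sqrt{\frac{d\bar L(f(x_0)-f^* )}{K}}.$$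
   Context: $\mathrm{sign}\,t=1,0,-1$ for $t>0,t=0,t<0$, entrywise. Convention: a term $g_{k,i}^2/\sigma_i$ with $g_{k,i}=\sigma_i=0$ is taken to be $0$. *)

theory Defs
  imports "HOL-Probability.Probability"
begin

definition sgn_vec :: "real ^ 'n \<Rightarrow> real ^ 'n" where
  "sgn_vec v = (\<chi> i. sgn (v $ i))"

definition cdf_of :: "real measure \<Rightarrow> real \<Rightarrow> real" where
  "cdf_of \<mu> t = measure \<mu> {..t}"

definition unimodal :: "real measure \<Rightarrow> bool" where
  "unimodal \<mu> \<longleftrightarrow> (\<exists>c. convex_on {..<c} (cdf_of \<mu>) \<and> concave_on {c<..} (cdf_of \<mu>))"

definition symmetric_about :: "real measure \<Rightarrow> real \<Rightarrow> bool" where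
  "symmetric_about \<mu> m \<longleftrightarrow> distr \<mu> borel (\<lambda>t. 2 * m - t) = \<mu>"

definition signsgd_step ::
  "(real ^ 'n \<Rightarrow> (real ^ 'n) measure) \<Rightarrow> real \<Rightarrow> real ^ 'n \<Rightarrow> (real ^ 'n) measure" where
  "signsgd_step Q \<gamma> x = distr (Q x) borel (\<lambda>v. x - \<gamma> *\<^sub>R sgn_vec v)"

text \<open>Distribution of the k-th signSGD iterate x_k started at x0 (fresh, independent
  gradient noise at every step, i.e. the Markov chain driven by the kernel Q).\<close>
primrec signsgd_dist ::
  "(real ^ 'n \<Rightarrow> (real ^ 'n) measure) \<Rightarrow> real \<Rightarrow> real ^ 'n \<Rightarrow> nat \<Rightarrow> (real ^ 'n) measure" where
  "signsgd_dist Q \<gamma> x0 0 = return borel x0"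
| "signsgd_dist Q \<gamma> x0 (Suc k) = signsgd_dist Q \<gamma> x0 k \<bind> signsgd_step Q \<gamma>"

end

theory Submission
  imports Defs
begin



lemma arith_core:
  fixes \<phi> :: "real \<Rightarrow> real" and M \<sigma> Y :: real
  assumes M: "M > 0" and sig: "\<sigma> \<ge> 0"
    and nonneg: "\<And>x. x > 0 \<Longrightarrow> \<phi> x \<ge> 0"
    and cheb: "\<And>x. x > 0 \<Longrightarrow> \<phi> x \<ge> 1 - \<sigma>^2 / x^2"
    and conc: "\<And>e a s. 0 < e \<Longrightarrow> e < a \<Longrightarrow> a < s \<Longrightarrow> (s - e) * \<phi> a \<ge> (s - a) * \<phi> e + (a - e) * \<phi> s"
    and Y: "\<And>a. 0 < a \<Longrightarrow> a < M \<Longrightarrow> Y \<ge> \<phi> a"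
  shows "M * Y \<ge> (1/3) * (if \<sigma> < sqrt 3 / 2 * M then M else M^2 / \<sigma>)"
proof -
  define a where "a = 99/100 * M"
  define e where "e = a / 100"
  have a0: "0 < a" "a < M" using M by (auto simp: a_def)
  have e0: "0 < e" "e < a" using a0 by (auto simp: e_def)
  have Ya: "Y \<ge> \<phi> a" using Y a0 by auto
  have s3: "sqrt 3 * sqrt 3 = (3::real)" by simp
  have s3b: "sqrt 3 < (1.7321::real)" by (rule real_less_lsqrt) (auto simp: power2_eq_square)
  have s3c: "sqrt 3 > (1.732::real)" by (rule real_less_rsqrt) (auto simp: power2_eq_square)
  show ?thesis
  proof (cases "\<sigma> = 0")
    case True
    have "\<phi> a \<ge> 1" using cheb[OF a0(1)] True by simp
    then have "Y \<ge> 1" using Ya by simp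
    moreover have "\<sigma> < sqrt 3 / 2 * M" using True M by simp
    ultimately show ?thesis using M by simp
  next
    case False
    then have sp: "\<sigma> > 0" using sig by simp
    show ?thesis
    proof (cases "a \<ge> sqrt 3 * \<sigma>")
      case True
      have "\<sigma>^2 / a^2 \<le> 1/3"
      proof -
        have "a^2 \<ge> (sqrt 3 * \<sigma>)^2" using True sp by (intro power_mono) auto
        then have "a^2 \<ge> 3 * \<sigma>^2" by (simp add: power_mult_distrib)
        then show ?thesis using a0 by (simp add: divide_simps)
      qed
      then have "\<phi> a \<ge> 2/3" using cheb[OF a0(1)] by simp
      then have Y23: "Y \<ge> 2/3" using Ya by simp
      have "\<sigma> < sqrt 3 / 2 * M"
      proof -
        have "sqrt 3 * \<sigma> < sqrt 3 * (sqrt 3 / 2 * M)" using True M s3 a0 unfolding a_def by (simp add: algebra_simps)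
        then show ?thesis by simp
      qed
      then show ?thesis using Y23 M by simp
    next
      case False
      define s where "s = sqrt 3 * \<sigma>"
      have as: "a < s" using False s_def by simp
      have ss: "s^2 = 3 * \<sigma>^2" by (simp add: s_def power_mult_distrib)
      have sp2: "s > 0" using sp s_def by simp
      have ps: "\<phi> s \<ge> 2/3" using cheb[OF sp2] ss sp by (simp add: field_simps)
      have "(s - e) * \<phi> a \<ge> (a - e) * \<phi> s"
        using conc[OF e0 as] nonneg[OF e0(1)] as e0 by (smt (verit) mult_nonneg_nonneg)
      moreover have "(a - e) * \<phi> s \<ge> (a - e) * (2/3)" using ps e0 by (intro mult_left_mono) auto
      moreover have "s * \<phi> a \<ge> (s - e) * \<phi> a"
      proof -
        have "\<phi> a \<ge> 0" using nonneg a0 by simp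
        then show ?thesis using e0 by (simp add: mult_right_mono)
      qed
      ultimately have key: "s * Y \<ge> (a - e) * (2/3)" using Ya sp2
        by (smt (verit) mult_left_mono)
      have ae: "a - e = 9801/10000 * M" by (simp add: a_def e_def)
      show ?thesis
      proof (cases "\<sigma> < sqrt 3 / 2 * M")
        case True
        have "sqrt 3 * \<sigma> < sqrt 3 * (sqrt 3 / 2 * M)" using True by (intro mult_strict_left_mono) auto
        then have "2 * s < 3 * M" using s3 unfolding s_def by (simp add: algebra_simps)
        moreover have "s * Y \<ge> 9801/10000 * M * (2/3)" using key ae by simp
        ultimately have "s * Y \<ge> s * (1/3)" using sp2 by linarith
        then have "Y \<ge> 1/3" using sp2 by simp
        then show ?thesis using True M by simp
      next
        case nH: False
        have "M^2/\<sigma> = M * (M/\<sigma>)" by (simp add: power2_eq_square)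
        have "s * Y \<ge> s * (M / (3*\<sigma>))"
        proof -
          have "s * (M/(3*\<sigma>)) = sqrt 3 * M / 3" using sp by (simp add: s_def)
          also have "\<dots> \<le> 9801/10000 * M * (2/3)" using s3b M by simp
          finally show ?thesis using key ae by simp
        qed
        then have "Y \<ge> M / (3*\<sigma>)" using sp2 by (metis mult_le_cancel_left_pos times_divide_eq_right)
        then have "M * Y \<ge> M * (M / (3*\<sigma>))" using M by (intro mult_left_mono) auto
        then show ?thesis using nH by (simp add: power2_eq_square)
      qed
    qed
  qed
qed




lemma coord_prep:
  fixes \<mu> :: "real measure"
  assumes prob: "prob_space \<mu>" and sets: "sets \<mu> = sets borel"
    and sym: "symmetric_about \<mu> m"
  shows "\<And>A. A \<in> sets borel \<Longrightarrow> measure \<mu> ((\<lambda>t. 2*m - t) -` A) = measure \<mu> A"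
proof -
  fix A :: "real set" assume A: "A \<in> sets borel"
  have sp: "space \<mu> = UNIV" using sets_eq_imp_space_eq[OF sets] by simp
  have meas: "(\<lambda>t. 2*m - t) \<in> measurable \<mu> borel"
    by (subst measurable_cong_sets[OF sets refl]) simp
  have "measure \<mu> A = measure (distr \<mu> borel (\<lambda>t. 2*m - t)) A"
    using sym unfolding symmetric_about_def by simp
  also have "\<dots> = measure \<mu> ((\<lambda>t. 2*m - t) -` A \<inter> space \<mu>)"
    by (rule measure_distr[OF meas A])
  finally show "measure \<mu> ((\<lambda>t. 2*m - t) -` A) = measure \<mu> A" using sp by simp
qed




lemma coord_sgn:
  fixes \<mu> :: "real measure"
  assumes prob: "prob_space \<mu>" and sets: "sets \<mu> = sets borel"
  shows "(\<integral>t. sgn t \<partial>\<mu>) = measure \<mu> {0<..} - measure \<mu> {..<0}"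
proof -
  interpret prob_space \<mu> by fact
  have eq: "(\<lambda>t::real. sgn t) = (\<lambda>t. indicator {0<..} t - indicator {..<0} t)"
    by (auto simp: sgn_real_def indicator_def fun_eq_iff)
  have s1: "{0<..} \<in> sets \<mu>" "{..<0::real} \<in> sets \<mu>" using sets by auto
  have i1: "integrable \<mu> (indicator {0<..} :: real \<Rightarrow> real)" "integrable \<mu> (indicator {..<0::real} :: real \<Rightarrow> real)"
    using s1 by (auto intro!: integrable_indicator simp: emeasure_eq_measure)
  show ?thesis unfolding eq using s1 i1
    by (simp add: Bochner_Integration.integral_diff)
qed

lemma coord_main:
  fixes \<mu> :: "real measure"
  assumes prob: "prob_space \<mu>" and sets: "sets \<mu> = sets borel"
    and sym: "symmetric_about \<mu> m"
    and sig: "\<sigma> \<ge> 0"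
    and mean: "integrable \<mu> (\<lambda>t. t)" "(\<integral>t. t \<partial>\<mu>) = m"
    and sq: "integrable \<mu> (\<lambda>t. t^2)"
    and var: "(\<integral>t. (t - m)^2 \<partial>\<mu>) = \<sigma>^2"
  shows "\<exists>Y. m * (\<integral>t. sgn t \<partial>\<mu>) \<ge> \<bar>m\<bar> * Y \<and> Y = measure \<mu> {t. \<bar>t - m\<bar> < \<bar>m\<bar>}
     \<and> (\<forall>x>0. measure \<mu> {t. \<bar>t - m\<bar> \<ge> x} \<le> \<sigma>^2 / x^2)"
proof -
  interpret prob_space \<mu> by fact
  have sp: "space \<mu> = UNIV" using sets_eq_imp_space_eq[OF sets] by simp
  note symm = coord_prep[OF prob sets sym]
  note sg = coord_sgn[OF prob sets]
  have cheb: "\<forall>x>0. measure \<mu> {t. \<bar>t - m\<bar> \<ge> x} \<le> \<sigma>^2 / x^2"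
  proof (intro allI impI)
    fix x :: real assume x: "x > 0"
    have rv: "random_variable borel (\<lambda>t::real. t)"
      by (subst measurable_cong_sets[OF sets refl]) simp
    have "prob {t\<in>space \<mu>. \<bar>t - expectation (\<lambda>t. t)\<bar> \<ge> x} \<le> variance (\<lambda>t. t) / x^2"
      by (rule Chebyshev_inequality[OF rv sq x])
    then show "measure \<mu> {t. \<bar>t - m\<bar> \<ge> x} \<le> \<sigma>^2 / x^2"
      using mean var sp by simp
  qed
  have Ys: "{t. \<bar>t - m\<bar> < \<bar>m\<bar>} \<in> sets \<mu>" unfolding sets by measurable
  define Y where "Y = measure \<mu> {t. \<bar>t - m\<bar> < \<bar>m\<bar>}"
  have "m * (\<integral>t. sgn t \<partial>\<mu>) \<ge> \<bar>m\<bar> * Y"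
  proof (cases "m > 0")
    case True
    have a: "measure \<mu> {..<0} = measure \<mu> {2*m<..}"
    proof -
      have "(\<lambda>t. 2*m - t) -` {..<0} = {2*m<..}" by auto
      then show ?thesis using symm[of "{..<0}"] by simp
    qed
    have u: "{0<..} = {t. \<bar>t - m\<bar> < \<bar>m\<bar>} \<union> ({2*m<..} \<union> {2*m})" using True by auto
    have "measure \<mu> {0<..} = Y + measure \<mu> ({2*m<..} \<union> {2*m})"
      unfolding u Y_def
      by (rule finite_measure_Union) (use sets True Ys in auto)
    also have "\<dots> \<ge> Y + measure \<mu> {2*m<..}"
      by (intro add_left_mono finite_measure_mono) (auto simp: sets)
    finally have "measure \<mu> {0<..} - measure \<mu> {..<0} \<ge> Y" using a by simp
    then have "m * (measure \<mu> {0<..} - measure \<mu> {..<0}) \<ge> m * Y" using True by (intro mult_left_mono) auto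
    then show ?thesis using True sg by simp
  next
    case False
    show ?thesis
    proof (cases "m = 0")
      case True then show ?thesis by simp
    next
      case False2: False
      with False have mn: "m < 0" by simp
      have a: "measure \<mu> {0<..} = measure \<mu> {..<2*m}"
      proof -
        have "(\<lambda>t. 2*m - t) -` {0<..} = {..<2*m}" by auto
        then show ?thesis using symm[of "{0<..}"] by simp
      qed
      have u: "{..<0} = {t. \<bar>t - m\<bar> < \<bar>m\<bar>} \<union> ({..<2*m} \<union> {2*m})" using mn by auto
      have "measure \<mu> {..<0} = Y + measure \<mu> ({..<2*m} \<union> {2*m})"
        unfolding u Y_def
        by (rule finite_measure_Union) (use sets mn Ys in auto)
      also have "\<dots> \<ge> Y + measure \<mu> {..<2*m}"
        by (intro add_left_mono finite_measure_mono) (auto simp: sets)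
      finally have "measure \<mu> {..<0} - measure \<mu> {0<..} \<ge> Y" using a by simp
      then have "(-m) * (measure \<mu> {..<0} - measure \<mu> {0<..}) \<ge> (-m) * Y" using mn by (intro mult_left_mono) auto
      moreover have "m * (\<integral>t. sgn t \<partial>\<mu>) = (-m) * (measure \<mu> {..<0} - measure \<mu> {0<..})"
        unfolding sg by (simp add: algebra_simps)
      ultimately show ?thesis using mn by simp
    qed
  qed
  note main = this
  show ?thesis
  proof (intro exI conjI)
    show "m * (\<integral>t. sgn t \<partial>\<mu>) \<ge> \<bar>m\<bar> * Y" by (rule main)
    show "Y = measure \<mu> {t. \<bar>t - m\<bar> < \<bar>m\<bar>}" by (rule Y_def)
    show "\<forall>x>0. measure \<mu> {t. \<bar>t - m\<bar> \<ge> x} \<le> \<sigma>^2 / x^2" by (rule cheb)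
  qed
qed




lemma coord_bound:
  fixes \<mu> :: "real measure"
  assumes prob: "prob_space \<mu>" and sets: "sets \<mu> = sets borel"
    and uni: "unimodal \<mu>"
    and sym: "symmetric_about \<mu> m"
    and sig: "\<sigma> \<ge> 0"
    and mean: "integrable \<mu> (\<lambda>t. t)" "(\<integral>t. t \<partial>\<mu>) = m"
    and sq: "integrable \<mu> (\<lambda>t. t^2)"
    and var: "(\<integral>t. (t - m)^2 \<partial>\<mu>) = \<sigma>^2"
  shows "m * (\<integral>t. sgn t \<partial>\<mu>) \<ge> (1/3) * (if \<sigma> < sqrt 3 / 2 * \<bar>m\<bar> then \<bar>m\<bar> else m^2 / \<sigma>)"
proof (cases "m = 0")
  case True
  then show ?thesis using sig by simp
next
  case False
  interpret prob_space \<mu> by fact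
  have sp: "space \<mu> = UNIV" using sets_eq_imp_space_eq[OF sets] by simp
  note symm = coord_prep[OF prob sets sym]
  obtain Y where Y1: "m * (\<integral>t. sgn t \<partial>\<mu>) \<ge> \<bar>m\<bar> * Y"
     and Y2: "Y = measure \<mu> {t. \<bar>t - m\<bar> < \<bar>m\<bar>}"
     and cheb: "\<forall>x>0. measure \<mu> {t. \<bar>t - m\<bar> \<ge> x} \<le> \<sigma>^2 / x^2"
    using coord_main[OF prob sets sym sig mean sq var] by blast
  define F where "F = cdf_of \<mu>"
  have Fdef: "\<And>t. F t = measure \<mu> {..t}" by (simp add: F_def cdf_of_def)
  obtain c where cvx: "convex_on {..<c} F" and ccv: "concave_on {c<..} F"
    using uni unfolding unimodal_def F_def by blast
  have M: "\<bar>m\<bar> > 0" using False by simp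
  have ms: "\<And>P. Measurable.pred borel P \<Longrightarrow> {t. P t} \<in> sets \<mu>" using sets by auto
  have cheb2: "\<And>A x. x > 0 \<Longrightarrow> A \<in> sets \<mu> \<Longrightarrow> - A \<subseteq> {t. \<bar>t - m\<bar> \<ge> x} \<Longrightarrow> measure \<mu> A \<ge> 1 - \<sigma>^2/x^2"
  proof -
    fix A :: "real set" and x :: real assume x: "x > 0" and A: "A \<in> sets \<mu>" and sub: "- A \<subseteq> {t. \<bar>t - m\<bar> \<ge> x}"
    have B: "{t. \<bar>t - m\<bar> \<ge> x} \<in> sets \<mu>" by (rule ms) measurable
    have "1 = measure \<mu> (A \<union> {t. \<bar>t - m\<bar> \<ge> x})"
    proof -
      have "A \<union> {t. \<bar>t - m\<bar> \<ge> x} = space \<mu>" using sub sp by auto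
      then show ?thesis using prob_space by simp
    qed
    also have "\<dots> \<le> measure \<mu> A + measure \<mu> {t. \<bar>t - m\<bar> \<ge> x}" by (rule measure_Un_le[OF A B])
    finally show "measure \<mu> A \<ge> 1 - \<sigma>^2/x^2" using cheb x by force
  qed
  have comb: "(1 - (a - e)/(s - e)) * e + (a - e)/(s - e) * s = a \<and> 0 \<le> (a - e)/(s - e) \<and> (a - e)/(s - e) \<le> 1
      \<and> (s - e) * (1 - (a - e)/(s - e)) = s - a \<and> (s - e) * ((a - e)/(s - e)) = a - e" if h: "0 < e" "e < a" "a < s" for e a s :: real
  proof -
    have d: "s - e > 0" using h by simp
    define q where "q = (a - e)/(s - e)"
    have u: "(s - e) * q = a - e" using d by (simp add: q_def)
    have "(1 - q) * e + q * s = e + (s - e) * q" by (simp add: algebra_simps)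
    then have c1: "(1 - q) * e + q * s = a" using u by simp
    have c2: "0 \<le> q" using h d by (simp add: q_def)
    have c3: "q \<le> 1" using h d by (simp add: q_def)
    have c4: "(s - e) * (1 - q) = s - a" using u by (simp add: algebra_simps)
    show ?thesis using c1 c2 c3 c4 u unfolding q_def by blast
  qed
  show ?thesis
  proof (cases "c \<le> m")
    case True
    define \<phi> where "\<phi> x = measure \<mu> {t. \<bar>t - m\<bar> \<le> x}" for x
    have phiF: "\<phi> x = 2 * F (m + x) - 1" if x: "x \<ge> 0" for x
    proof -
      have e1: "{t. \<bar>t - m\<bar> \<le> x} = {..m+x} - {..<m-x}" using x by auto
      have "\<phi> x = F (m + x) - measure \<mu> {..<m-x}"
        unfolding \<phi>_def e1 Fdef using x sets by (subst finite_measure_Diff) auto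
      moreover have "measure \<mu> {..<m-x} = measure \<mu> {m+x<..}"
      proof -
        have "(\<lambda>t. 2*m - t) -` {m+x<..} = {..<m-x}" by auto
        then show ?thesis using symm[of "{m+x<..}"] by simp
      qed
      moreover have "measure \<mu> {m+x<..} = 1 - F (m + x)"
      proof -
        have "{m+x<..} = space \<mu> - {..m+x}" using sp by auto
        then show ?thesis unfolding Fdef using sets by (simp add: prob_compl)
      qed
      ultimately show ?thesis by simp
    qed
    have core: "\<bar>m\<bar> * Y \<ge> (1/3) * (if \<sigma> < sqrt 3 / 2 * \<bar>m\<bar> then \<bar>m\<bar> else \<bar>m\<bar>^2 / \<sigma>)"
    proof (rule arith_core[OF M sig])
      show "\<phi> x \<ge> 0" for x by (simp add: \<phi>_def)
      show "\<phi> x \<ge> 1 - \<sigma>^2/x^2" if "x > 0" for x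
        unfolding \<phi>_def by (rule cheb2[OF that]) (auto intro: ms)
      show "Y \<ge> \<phi> a" if "0 < a" "a < \<bar>m\<bar>" for a
        unfolding Y2 \<phi>_def using that by (intro finite_measure_mono) (auto intro: ms)
      show "(s - e) * \<phi> a \<ge> (s - a) * \<phi> e + (a - e) * \<phi> s" if h: "0 < e" "e < a" "a < s" for e a s
      proof -
        define u where "u = (a - e)/(s - e)"
        have cb: "(1 - u) * e + u * s = a" "0 \<le> u" "u \<le> 1" "(s - e) * (1 - u) = s - a" "(s - e) * u = a - e"
          using comb[OF h] unfolding u_def by auto
        have pt: "(1 - u) *\<^sub>R (m + e) + u *\<^sub>R (m + s) = m + a"
          using cb(1) by (simp add: algebra_simps)
        have "F ((1 - u) *\<^sub>R (m + e) + u *\<^sub>R (m + s)) \<ge> (1 - u) * F (m + e) + u * F (m + s)"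
          by (rule concave_onD[OF ccv cb(2) cb(3)]) (use True h in auto)
        then have "F (m + a) \<ge> (1 - u) * F (m + e) + u * F (m + s)" using pt by simp
        then have "(s - e) * F (m + a) \<ge> (s - e) * ((1 - u) * F (m + e) + u * F (m + s))"
          using h by (intro mult_left_mono) auto
        moreover have "(s - e) * ((1 - u) * F (m + e) + u * F (m + s)) = ((s - e) * (1 - u)) * F (m + e) + ((s - e) * u) * F (m + s)"
          by (simp add: algebra_simps)
        ultimately have "(s - e) * F (m + a) \<ge> (s - a) * F (m + e) + (a - e) * F (m + s)"
          using cb(4,5) by simp
        moreover have "(s - e) * \<phi> a - ((s - a) * \<phi> e + (a - e) * \<phi> s) = 2 * ((s - e) * F (m + a) - ((s - a) * F (m + e) + (a - e) * F (m + s)))"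
        proof -
          have "\<phi> a = 2 * F (m + a) - 1" "\<phi> e = 2 * F (m + e) - 1" "\<phi> s = 2 * F (m + s) - 1" using phiF h by auto
          then show ?thesis by (simp only:) (simp add: algebra_simps)
        qed
        ultimately have "0 \<le> (s - e) * \<phi> a - ((s - a) * \<phi> e + (a - e) * \<phi> s)" by simp
        then show ?thesis by simp
      qed
    qed
    show ?thesis using core[unfolded power2_abs] Y1 by linarith
  next
    case False
    define \<phi> where "\<phi> x = measure \<mu> {t. \<bar>t - m\<bar> < x}" for x
    have phiF: "\<phi> x = 1 - 2 * F (m - x)" if x: "x > 0" for x
    proof -
      have e1: "{t. \<bar>t - m\<bar> < x} = space \<mu> - ({..m-x} \<union> {m+x..})" using x sp by auto
      have "measure \<mu> ({..m-x} \<union> {m+x..}) = F (m - x) + measure \<mu> {m+x..}"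
        unfolding Fdef using x sets by (subst finite_measure_Union) auto
      moreover have "measure \<mu> {m+x..} = measure \<mu> {..m-x}"
      proof -
        have "(\<lambda>t. 2*m - t) -` {..m-x} = {m+x..}" by auto
        then show ?thesis using symm[of "{..m-x}"] by simp
      qed
      moreover have "\<phi> x = 1 - measure \<mu> ({..m-x} \<union> {m+x..})"
        unfolding \<phi>_def e1 using sets by (subst prob_compl) auto
      ultimately show ?thesis unfolding Fdef by simp
    qed
    have core: "\<bar>m\<bar> * Y \<ge> (1/3) * (if \<sigma> < sqrt 3 / 2 * \<bar>m\<bar> then \<bar>m\<bar> else \<bar>m\<bar>^2 / \<sigma>)"
    proof (rule arith_core[OF M sig])
      show "\<phi> x \<ge> 0" for x by (simp add: \<phi>_def)
      show "\<phi> x \<ge> 1 - \<sigma>^2/x^2" if "x > 0" for x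
        unfolding \<phi>_def by (rule cheb2[OF that]) (auto intro: ms)
      show "Y \<ge> \<phi> a" if "0 < a" "a < \<bar>m\<bar>" for a
        unfolding Y2 \<phi>_def using that by (intro finite_measure_mono) (auto intro: ms)
      show "(s - e) * \<phi> a \<ge> (s - a) * \<phi> e + (a - e) * \<phi> s" if h: "0 < e" "e < a" "a < s" for e a s
      proof -
        define u where "u = (a - e)/(s - e)"
        have cb: "(1 - u) * e + u * s = a" "0 \<le> u" "u \<le> 1" "(s - e) * (1 - u) = s - a" "(s - e) * u = a - e"
          using comb[OF h] unfolding u_def by auto
        have pt: "(1 - u) *\<^sub>R (m - e) + u *\<^sub>R (m - s) = m - a"
          using cb(1) by (simp add: algebra_simps)
        have "F ((1 - u) *\<^sub>R (m - e) + u *\<^sub>R (m - s)) \<le> (1 - u) * F (m - e) + u * F (m - s)"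
          by (rule convex_onD[OF cvx cb(2) cb(3)]) (use False h in auto)
        then have "F (m - a) \<le> (1 - u) * F (m - e) + u * F (m - s)" using pt by simp
        then have "(s - e) * F (m - a) \<le> (s - e) * ((1 - u) * F (m - e) + u * F (m - s))"
          using h by (intro mult_left_mono) auto
        moreover have "(s - e) * ((1 - u) * F (m - e) + u * F (m - s)) = ((s - e) * (1 - u)) * F (m - e) + ((s - e) * u) * F (m - s)"
          by (simp add: algebra_simps)
        ultimately have "(s - e) * F (m - a) \<le> (s - a) * F (m - e) + (a - e) * F (m - s)"
          using cb(4,5) by simp
        moreover have "(s - e) * \<phi> a - ((s - a) * \<phi> e + (a - e) * \<phi> s) = 2 * (((s - a) * F (m - e) + (a - e) * F (m - s)) - (s - e) * F (m - a))"
        proof -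
          have "\<phi> a = 1 - 2 * F (m - a)" "\<phi> e = 1 - 2 * F (m - e)" "\<phi> s = 1 - 2 * F (m - s)" using phiF h by auto
          then show ?thesis by (simp only:) (simp add: algebra_simps)
        qed
        ultimately have "0 \<le> (s - e) * \<phi> a - ((s - a) * \<phi> e + (a - e) * \<phi> s)" by simp
        then show ?thesis by simp
      qed
    qed
    show ?thesis using core[unfolded power2_abs] Y1 by linarith
  qed
qed




lemma vec_nth_meas[measurable]: "(\<lambda>v::real^'n. v $ i) \<in> borel_measurable borel"
  by (intro borel_measurable_continuous_onI continuous_intros)

lemma sgn_vec_meas[measurable]: "sgn_vec \<in> borel_measurable (borel :: (real^'n) measure)"
proof -
  have "\<forall>b\<in>(Basis :: (real^'n) set). (\<lambda>x. sgn_vec x \<bullet> b) \<in> borel_measurable borel"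
  proof
    fix b :: "real^'n" assume "b \<in> Basis"
    then obtain i where b: "b = axis i 1" by (auto simp: Basis_vec_def)
    have "(\<lambda>x. sgn_vec x \<bullet> b) = (\<lambda>x. sgn (x $ i))"
      by (simp add: b inner_axis sgn_vec_def)
    then show "(\<lambda>x. sgn_vec x \<bullet> b) \<in> borel_measurable borel" by simp
  qed
  then show ?thesis using borel_measurable_euclidean_space by blast
qed

lemma step_kernel:
  assumes kernel: "Q \<in> borel \<rightarrow>\<^sub>M prob_algebra borel"
  shows "signsgd_step Q \<gamma> \<in> (borel :: (real^'n) measure) \<rightarrow>\<^sub>M prob_algebra borel"
proof -
  have "(\<lambda>x. distr (Q x) borel (\<lambda>v. x - \<gamma> *\<^sub>R sgn_vec v)) \<in> (borel :: (real^'n) measure) \<rightarrow>\<^sub>M prob_algebra borel"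
  proof (rule measurable_prob_algebraI)
    show "(\<lambda>x. distr (Q x) borel (\<lambda>v. x - \<gamma> *\<^sub>R sgn_vec v)) \<in> borel \<rightarrow>\<^sub>M subprob_algebra borel"
    proof (rule measurable_distr2[where M=borel])
      show "(\<lambda>(x, v). x - \<gamma> *\<^sub>R sgn_vec v) \<in> (borel :: (real^'n) measure) \<Otimes>\<^sub>M (borel :: (real^'n) measure) \<rightarrow>\<^sub>M borel"
      proof -
        have h1: "(\<lambda>p. fst p) \<in> ((borel :: (real^'n) measure) \<Otimes>\<^sub>M (borel :: (real^'n) measure)) \<rightarrow>\<^sub>M borel"
          by (rule measurable_fst'') (rule measurable_ident_sets, rule refl)
        have h2: "(\<lambda>p. sgn_vec (snd p)) \<in> ((borel :: (real^'n) measure) \<Otimes>\<^sub>M (borel :: (real^'n) measure)) \<rightarrow>\<^sub>M borel"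
          by (rule measurable_compose[OF measurable_snd sgn_vec_meas])
        have "(\<lambda>p. fst p - \<gamma> *\<^sub>R sgn_vec (snd p)) \<in> ((borel :: (real^'n) measure) \<Otimes>\<^sub>M (borel :: (real^'n) measure)) \<rightarrow>\<^sub>M borel"
          by (rule borel_measurable_diff[OF h1 borel_measurable_scaleR[OF borel_measurable_const h2]])
        then show ?thesis by (simp add: case_prod_beta')
      qed
      show "Q \<in> borel \<rightarrow>\<^sub>M subprob_algebra borel" using kernel by (rule measurable_prob_algebraD)
    qed
    fix x :: "real^'n" assume "x \<in> space borel"
    have "Q x \<in> space (prob_algebra borel)" using measurable_space[OF kernel, of x] by simp
    then have "Q x \<in> {N. sets N = sets borel \<and> prob_space N}" by (simp only: space_prob_algebra)
    then have pq: "prob_space (Q x)" and sq: "sets (Q x) = sets borel" by blast+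
    have mb: "(\<lambda>v. x - \<gamma> *\<^sub>R sgn_vec v) \<in> (borel :: (real^'n) measure) \<rightarrow>\<^sub>M borel"
      by (rule borel_measurable_diff[OF borel_measurable_const borel_measurable_scaleR[OF borel_measurable_const sgn_vec_meas]])
    have "(\<lambda>v. x - \<gamma> *\<^sub>R sgn_vec v) \<in> Q x \<rightarrow>\<^sub>M borel"
      using mb by (simp only: measurable_cong_sets[OF sq refl])
    then show "prob_space (distr (Q x) borel (\<lambda>v. x - \<gamma> *\<^sub>R sgn_vec v))"
      by (rule prob_space.prob_space_distr[OF pq])
  qed
  then show ?thesis unfolding signsgd_step_def[abs_def] .
qed

lemma dist_space:
  assumes kernel: "Q \<in> borel \<rightarrow>\<^sub>M prob_algebra borel"
  shows "signsgd_dist Q \<gamma> x0 k \<in> space (prob_algebra (borel :: (real^'n) measure))"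
proof (induction k)
  case 0
  show ?case using measurable_space[OF measurable_return_prob_space[of "borel :: (real^'n) measure"]] by simp
next
  case (Suc k)
  note sk = step_kernel[OF kernel, of \<gamma>]
  show ?case using prob_space_bind'[OF Suc sk] sets_bind'[OF Suc sk]
    by (simp add: space_prob_algebra)
qed




lemma step_bound:
  fixes f :: "real ^ 'n \<Rightarrow> real"
    and G :: "real ^ 'n \<Rightarrow> real ^ 'n"
    and L :: "'n \<Rightarrow> real"
    and Q :: "real ^ 'n \<Rightarrow> (real ^ 'n) measure"
    and \<sigma> :: "real ^ 'n \<Rightarrow> 'n \<Rightarrow> real"
  assumes lower: "\<And>x. f x \<ge> fstar"
    and fmeas: "f \<in> borel_measurable borel"
    and L_nonneg: "\<And>i. L i \<ge> 0"
    and smooth: "\<And>x y. f y \<le> f x + G x \<bullet> (y - x) + (\<Sum>i\<in>UNIV. L i / 2 * (y $ i - x $ i)^2)"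
    and kernel: "Q \<in> borel \<rightarrow>\<^sub>M prob_algebra borel"
    and unbiased: "\<And>x i. integrable (Q x) (\<lambda>v. v $ i) \<and> (\<integral>v. v $ i \<partial>Q x) = G x $ i"
    and unimod: "\<And>x i. unimodal (distr (Q x) borel (\<lambda>v. v $ i))"
    and symm: "\<And>x i. symmetric_about (distr (Q x) borel (\<lambda>v. v $ i)) (G x $ i)"
    and sigma_nonneg: "\<And>x i. \<sigma> x i \<ge> 0"
    and variance: "\<And>x i. integrable (Q x) (\<lambda>v. (v $ i)^2) \<and>
                          (\<integral>v. (v $ i - G x $ i)^2 \<partial>Q x) = (\<sigma> x i)^2"
    and gpos: "\<gamma> > 0"
  shows "ennreal (\<gamma> / 3 * ((\<Sum>i\<in>{i. \<sigma> x i < sqrt 3 / 2 * \<bar>G x $ i\<bar>}. \<bar>G x $ i\<bar>)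
              + (\<Sum>i\<in>UNIV - {i. \<sigma> x i < sqrt 3 / 2 * \<bar>G x $ i\<bar>}. (G x $ i)^2 / \<sigma> x i)))
          + (\<integral>\<^sup>+ y. ennreal (f y - fstar) \<partial>signsgd_step Q \<gamma> x)
         \<le> ennreal (f x - fstar + \<gamma>^2 * (\<Sum>i\<in>UNIV. L i) / 2)"
proof -
  define H where "H = {i. \<sigma> x i < sqrt 3 / 2 * \<bar>G x $ i\<bar>}"
  define \<Phi>i where "\<Phi>i i = (if \<sigma> x i < sqrt 3 / 2 * \<bar>G x $ i\<bar> then \<bar>G x $ i\<bar> else (G x $ i)^2 / \<sigma> x i)" for i
  define \<Phi> where "\<Phi> = (\<Sum>i\<in>H. \<bar>G x $ i\<bar>) + (\<Sum>i\<in>UNIV - H. (G x $ i)^2 / \<sigma> x i)"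
  define \<Lambda> where "\<Lambda> = (\<Sum>i\<in>UNIV. L i)"
  have PhiSum: "\<Phi> = (\<Sum>i\<in>UNIV. \<Phi>i i)"
  proof -
    have "(\<Sum>i\<in>UNIV. \<Phi>i i) = (\<Sum>i\<in>UNIV \<inter> {i. \<sigma> x i < sqrt 3 / 2 * \<bar>G x $ i\<bar>}. \<bar>G x $ i\<bar>)
          + (\<Sum>i\<in>UNIV \<inter> - {i. \<sigma> x i < sqrt 3 / 2 * \<bar>G x $ i\<bar>}. (G x $ i)^2 / \<sigma> x i)"
      unfolding \<Phi>i_def by (rule sum.If_cases) simp
    moreover have "UNIV \<inter> - H = UNIV - H" by auto
    ultimately show ?thesis unfolding \<Phi>_def H_def by simp
  qed
  have Phii_nn: "\<Phi>i i \<ge> 0" for i using sigma_nonneg[of x i] by (simp add: \<Phi>i_def)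
  have Phi_nn: "\<Phi> \<ge> 0" unfolding PhiSum by (rule sum_nonneg) (rule Phii_nn)
  have "Q x \<in> space (prob_algebra borel)" using measurable_space[OF kernel, of x] by simp
  then have "Q x \<in> {N. sets N = sets borel \<and> prob_space N}" by (simp only: space_prob_algebra)
  then have pq: "prob_space (Q x)" and sq: "sets (Q x) = sets borel" by blast+
  interpret Qx: prob_space "Q x" by (rule pq)
  have mQ: "\<And>g :: real^'n \<Rightarrow> 'b::topological_space. g \<in> borel_measurable borel \<Longrightarrow> g \<in> borel_measurable (Q x)"
    by (simp only: measurable_cong_sets[OF sq refl])
  define T where "T v = x - \<gamma> *\<^sub>R sgn_vec v" for v
  have Tm: "T \<in> borel_measurable (Q x)"
    unfolding T_def[abs_def]
    by (rule mQ, rule borel_measurable_diff[OF borel_measurable_const borel_measurable_scaleR[OF borel_measurable_const sgn_vec_meas]])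
  have Dm: "(\<lambda>y. ennreal (f y - fstar)) \<in> borel_measurable borel" using fmeas by measurable
  have eq1: "(\<integral>\<^sup>+ y. ennreal (f y - fstar) \<partial>signsgd_step Q \<gamma> x) = (\<integral>\<^sup>+ v. ennreal (f (T v) - fstar) \<partial>Q x)"
  proof -
    have Dm': "(\<lambda>y. ennreal (f y - fstar)) \<in> borel_measurable (distr (Q x) borel T)"
      by (simp only: measurable_cong_sets[OF sets_distr refl]) (rule Dm)
    have "signsgd_step Q \<gamma> x = distr (Q x) borel T" unfolding signsgd_step_def T_def by simp
    then show ?thesis using nn_integral_distr[OF Tm Dm'] by simp
  qed
  have sgm: "(\<lambda>v. sgn (v $ i)) \<in> borel_measurable (Q x)" for i
    by (rule mQ) measurable
  have sgi: "integrable (Q x) (\<lambda>v. sgn (v $ i))" for i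
  proof (rule Qx.integrable_const_bound[where B=1])
    show "AE v in Q x. norm (sgn (v $ i)) \<le> (1::real)" by (rule AE_I2) (auto simp: sgn_real_def)
    show "(\<lambda>v. sgn (v $ i)) \<in> borel_measurable (Q x)" by (rule sgm)
  qed
  have coordi: "G x $ i * (\<integral>v. sgn (v $ i) \<partial>Q x) \<ge> (1/3) * \<Phi>i i" for i
  proof -
    define \<mu> where "\<mu> = distr (Q x) borel (\<lambda>v. v $ i)"
    have pim: "(\<lambda>v. v $ i) \<in> measurable (Q x) borel" by (rule mQ) (rule vec_nth_meas)
    have pmu: "prob_space \<mu>" unfolding \<mu>_def by (rule Qx.prob_space_distr[OF pim])
    have smu: "sets \<mu> = sets borel" unfolding \<mu>_def by simp
    have idm: "(\<lambda>t::real. t) \<in> borel_measurable borel" by simp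
    have sqm: "(\<lambda>t::real. t^2) \<in> borel_measurable borel" by simp
    have sqm2: "(\<lambda>t::real. (t - G x $ i)^2) \<in> borel_measurable borel" by simp
    have sgnm: "(\<lambda>t::real. sgn t) \<in> borel_measurable borel" by simp
    have m1: "integrable \<mu> (\<lambda>t. t)" unfolding \<mu>_def
      using integrable_distr_eq[OF pim idm] unbiased[of x i] by simp
    have m2: "(\<integral>t. t \<partial>\<mu>) = G x $ i" unfolding \<mu>_def
      using integral_distr[OF pim idm] unbiased[of x i] by simp
    have m3: "integrable \<mu> (\<lambda>t. t^2)" unfolding \<mu>_def
      using integrable_distr_eq[OF pim sqm] variance[of x i] by simp
    have m4: "(\<integral>t. (t - G x $ i)^2 \<partial>\<mu>) = (\<sigma> x i)^2" unfolding \<mu>_def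
      using integral_distr[OF pim sqm2] variance[of x i] by simp
    have m5: "(\<integral>t. sgn t \<partial>\<mu>) = (\<integral>v. sgn (v $ i) \<partial>Q x)" unfolding \<mu>_def
      using integral_distr[OF pim sgnm] by simp
    have "G x $ i * (\<integral>t. sgn t \<partial>\<mu>) \<ge> (1/3) * (if \<sigma> x i < sqrt 3 / 2 * \<bar>G x $ i\<bar> then \<bar>G x $ i\<bar> else (G x $ i)^2 / \<sigma> x i)"
      by (rule coord_bound[OF pmu smu _ _ sigma_nonneg m1 m2 m3 m4])
         (use unimod[of x i] symm[of x i] in \<open>simp_all add: \<mu>_def\<close>)
    then show ?thesis using m5 by (simp add: \<Phi>i_def)
  qed
  define r where "r v = f x - fstar - \<gamma> * (\<Sum>i\<in>UNIV. G x $ i * sgn (v $ i)) + \<gamma>^2 * \<Lambda> / 2" for v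
  have rbound: "f (T v) - fstar \<le> r v" for v
  proof -
    have d: "T v - x = - (\<gamma> *\<^sub>R sgn_vec v)" by (simp add: T_def)
    have inn: "G x \<bullet> (T v - x) = - \<gamma> * (\<Sum>i\<in>UNIV. G x $ i * sgn (v $ i))"
      unfolding d by (simp add: inner_vec_def sgn_vec_def sum_distrib_left algebra_simps)
    have "(\<Sum>i\<in>UNIV. L i / 2 * (T v $ i - x $ i)^2) \<le> (\<Sum>i\<in>UNIV. L i / 2 * \<gamma>^2)"
    proof (rule sum_mono)
      fix i
      have "(T v $ i - x $ i)^2 = \<gamma>^2 * (sgn (v $ i))^2" by (simp add: T_def sgn_vec_def power_mult_distrib)
      also have "\<dots> \<le> \<gamma>^2" by (simp add: sgn_real_def)
      finally show "L i / 2 * (T v $ i - x $ i)^2 \<le> L i / 2 * \<gamma>^2"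
        using L_nonneg[of i] by (intro mult_left_mono) auto
    qed
    also have "\<dots> = \<gamma>^2 * \<Lambda> / 2" by (simp add: \<Lambda>_def sum_distrib_right sum_divide_distrib algebra_simps)
    finally show ?thesis using smooth[where x=x and y="T v"] inn unfolding r_def by linarith
  qed
  have r_nn: "r v \<ge> 0" for v using rbound[of v] lower[of "T v"] by linarith
  have ri: "integrable (Q x) r"
    unfolding r_def[abs_def]
    by (intro Bochner_Integration.integrable_add Bochner_Integration.integrable_diff
          integrable_mult_right Bochner_Integration.integrable_sum Qx.integrable_const sgi)
  have rint: "(\<integral>v. r v \<partial>Q x) = f x - fstar - \<gamma> * (\<Sum>i\<in>UNIV. G x $ i * (\<integral>v. sgn (v $ i) \<partial>Q x)) + \<gamma>^2 * \<Lambda> / 2"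
  proof -
    have i2: "integrable (Q x) (\<lambda>v. G x $ i * sgn (v $ i))" for i by (intro integrable_mult_right sgi)
    have "(\<integral>v. (\<Sum>i\<in>UNIV. G x $ i * sgn (v $ i)) \<partial>Q x) = (\<Sum>i\<in>UNIV. G x $ i * (\<integral>v. sgn (v $ i) \<partial>Q x))"
      by (subst Bochner_Integration.integral_sum) (auto intro: i2 simp: sgi)
    moreover have i3: "integrable (Q x) (\<lambda>v. \<gamma> * (\<Sum>i\<in>UNIV. G x $ i * sgn (v $ i)))"
      by (intro integrable_mult_right Bochner_Integration.integrable_sum i2)
    ultimately show ?thesis unfolding r_def[abs_def]
      using i3 by (simp add: Bochner_Integration.integral_diff Bochner_Integration.integral_add Qx.prob_space)
  qed
  have sumge: "(\<Sum>i\<in>UNIV. G x $ i * (\<integral>v. sgn (v $ i) \<partial>Q x)) \<ge> (1/3) * \<Phi>"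
    unfolding PhiSum sum_distrib_left by (rule sum_mono) (rule coordi)
  have "(\<integral>\<^sup>+ v. ennreal (f (T v) - fstar) \<partial>Q x) \<le> (\<integral>\<^sup>+ v. ennreal (r v) \<partial>Q x)"
    by (rule nn_integral_mono) (simp add: rbound ennreal_leI)
  also have "\<dots> = ennreal (\<integral>v. r v \<partial>Q x)"
    by (rule nn_integral_eq_integral[OF ri]) (simp add: r_nn)
  finally have A: "(\<integral>\<^sup>+ y. ennreal (f y - fstar) \<partial>signsgd_step Q \<gamma> x) \<le> ennreal (\<integral>v. r v \<partial>Q x)"
    using eq1 by simp
  have rint_nn: "(\<integral>v. r v \<partial>Q x) \<ge> 0" using r_nn by (simp add: Bochner_Integration.integral_nonneg)
  have B: "\<gamma> / 3 * \<Phi> + (\<integral>v. r v \<partial>Q x) \<le> f x - fstar + \<gamma>^2 * \<Lambda> / 2"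
  proof -
    have "\<gamma> * ((1/3) * \<Phi>) \<le> \<gamma> * (\<Sum>i\<in>UNIV. G x $ i * (\<integral>v. sgn (v $ i) \<partial>Q x))"
      using sumge gpos by (intro mult_left_mono) auto
    then show ?thesis unfolding rint by simp
  qed
  have "ennreal (\<gamma> / 3 * \<Phi>) + (\<integral>\<^sup>+ y. ennreal (f y - fstar) \<partial>signsgd_step Q \<gamma> x)
      \<le> ennreal (\<gamma> / 3 * \<Phi>) + ennreal (\<integral>v. r v \<partial>Q x)"
    using A by (rule add_left_mono)
  also have "\<dots> = ennreal (\<gamma> / 3 * \<Phi> + (\<integral>v. r v \<partial>Q x))"
    using Phi_nn gpos rint_nn by (intro ennreal_plus[symmetric]) auto
  also have "\<dots> \<le> ennreal (f x - fstar + \<gamma>^2 * \<Lambda> / 2)"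
    using B by (rule ennreal_leI)
  finally show ?thesis unfolding \<Phi>_def H_def \<Lambda>_def .
qed




lemma final_arith:
  fixes D0 \<Lambda> K \<gamma> :: real
  assumes D0: "D0 > 0" and La: "\<Lambda> > 0" and K: "K > 0" and g: "\<gamma> = sqrt (2 * D0 / (\<Lambda> * K))"
  shows "(1 / K) * (3 / \<gamma>) * (D0 + K * (\<gamma>^2 * \<Lambda> / 2)) \<le> 5 * sqrt (\<Lambda> * D0 / K)"
proof -
  have gp: "\<gamma> > 0" using g D0 La K by simp
  have g2: "\<gamma>^2 = 2 * D0 / (\<Lambda> * K)" using g D0 La K by simp
  have KC: "K * (\<gamma>^2 * \<Lambda> / 2) = D0" using g2 La K by (simp add: field_simps)
  define Z where "Z = sqrt (\<Lambda> * D0 / K)"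
  have Zp: "Z > 0" using D0 La K by (simp add: Z_def)
  have gZ: "\<gamma> * Z = sqrt 2 * D0 / K"
  proof -
    have "\<gamma> * Z = sqrt (2 * D0 / (\<Lambda> * K) * (\<Lambda> * D0 / K))" unfolding g Z_def by (rule real_sqrt_mult[symmetric])
    also have "2 * D0 / (\<Lambda> * K) * (\<Lambda> * D0 / K) = 2 * (D0 / K)^2" using La K by (simp add: field_simps power2_eq_square)
    also have "sqrt (2 * (D0 / K)^2) = sqrt 2 * (D0 / K)" using D0 K by (simp add: real_sqrt_mult)
    finally show ?thesis by simp
  qed
  have "(1 / K) * (3 / \<gamma>) * (D0 + K * (\<gamma>^2 * \<Lambda> / 2)) = 6 * D0 / (K * \<gamma>)" using KC gp K by (simp add: field_simps)
  also have "\<dots> = 6 * D0 * Z / (K * (\<gamma> * Z))" using Zp by (simp add: field_simps)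
  also have "\<dots> = 6 / sqrt 2 * Z" unfolding gZ using D0 K by (simp add: field_simps)
  also have "\<dots> \<le> 5 * Z"
  proof -
    have s2: "sqrt 2 > (1.2::real)" by (rule real_less_rsqrt) (simp add: power2_eq_square)
    then have "6 / sqrt 2 \<le> (5::real)" by (simp add: field_simps)
    then show ?thesis using Zp by (intro mult_right_mono) auto
  qed
  finally show ?thesis by (simp add: Z_def)
qed




theorem mainTheorem14:
  fixes f :: "real ^ 'n \<Rightarrow> real"
    and G :: "real ^ 'n \<Rightarrow> real ^ 'n"          \<comment> \<open>true gradient g(x)\<close>
    and L :: "'n \<Rightarrow> real"
    and fstar :: real
    and Q :: "real ^ 'n \<Rightarrow> (real ^ 'n) measure"  \<comment> \<open>law of the estimator \<open>\<hat>g(x)\<close>\<close>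
    and \<sigma> :: "real ^ 'n \<Rightarrow> 'n \<Rightarrow> real"
    and x0 :: "real ^ 'n"
    and K :: nat
  assumes lower: "\<And>x. f x \<ge> fstar"
    and grad: "\<And>x. (f has_derivative (\<lambda>h. G x \<bullet> h)) (at x)"
    and L_nonneg: "\<And>i. L i \<ge> 0"
    and smooth: "\<And>x y. f y \<le> f x + G x \<bullet> (y - x) + (\<Sum>i\<in>UNIV. L i / 2 * (y $ i - x $ i)^2)"
    and kernel: "Q \<in> borel \<rightarrow>\<^sub>M prob_algebra borel"
    and unbiased: "\<And>x i. integrable (Q x) (\<lambda>v. v $ i) \<and> (\<integral>v. v $ i \<partial>Q x) = G x $ i"
    and unimod: "\<And>x i. unimodal (distr (Q x) borel (\<lambda>v. v $ i))"
    and symm: "\<And>x i. symmetric_about (distr (Q x) borel (\<lambda>v. v $ i)) (G x $ i)"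
    and sigma_nonneg: "\<And>x i. \<sigma> x i \<ge> 0"
    and variance: "\<And>x i. integrable (Q x) (\<lambda>v. (v $ i)^2) \<and>
                          (\<integral>v. (v $ i - G x $ i)^2 \<partial>Q x) = (\<sigma> x i)^2"
    and K_pos: "K \<ge> 1"
    and gap: "f x0 > fstar"
  shows
    "(let d = real CARD('n);
          Lbar = (\<Sum>i\<in>UNIV. L i) / d;
          \<gamma> = sqrt (2 * (f x0 - fstar) / (d * Lbar * real K));
          H = (\<lambda>x. {i. \<sigma> x i < sqrt 3 / 2 * \<bar>G x $ i\<bar>});
          \<Phi> = (\<lambda>x. (\<Sum>i\<in>H x. \<bar>G x $ i\<bar>) + (\<Sum>i\<in>UNIV - H x. (G x $ i)^2 / \<sigma> x i))
      in ennreal (1 / real K) * (\<Sum>k<K. \<integral>\<^sup>+ x. ennreal (\<Phi> x) \<partial>signsgd_dist Q \<gamma> x0 k)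
           \<le> ennreal (5 * sqrt (d * Lbar * (f x0 - fstar) / real K)))"
proof -
  define d where "d = real CARD('n)"
  define \<Lambda> where "\<Lambda> = (\<Sum>i\<in>UNIV. L i)"
  define Lbar where "Lbar = \<Lambda> / d"
  define \<gamma> where "\<gamma> = sqrt (2 * (f x0 - fstar) / (d * Lbar * real K))"
  define \<Phi> where "\<Phi> = (\<lambda>x. (\<Sum>i\<in>{i. \<sigma> x i < sqrt 3 / 2 * \<bar>G x $ i\<bar>}. \<bar>G x $ i\<bar>)
       + (\<Sum>i\<in>UNIV - {i. \<sigma> x i < sqrt 3 / 2 * \<bar>G x $ i\<bar>}. (G x $ i)^2 / \<sigma> x i))"
  define D0 where "D0 = f x0 - fstar"
  have dpos: "d > 0" by (simp add: d_def)
  have dL: "d * Lbar = \<Lambda>" using dpos by (simp add: Lbar_def)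
  have D0p: "D0 > 0" using gap by (simp add: D0_def)
  have Lnn: "\<Lambda> \<ge> 0" unfolding \<Lambda>_def by (rule sum_nonneg) (rule L_nonneg)
  have Kp: "real K > 0" using K_pos by simp
  have fmeas: "f \<in> borel_measurable borel"
  proof (rule borel_measurable_continuous_onI)
    show "continuous_on UNIV f"
      by (rule continuous_at_imp_continuous_on) (use grad has_derivative_continuous in blast)
  qed
  have Dm: "(\<lambda>y. ennreal (f y - fstar)) \<in> borel_measurable borel" using fmeas by measurable
  note SB = step_bound[OF lower fmeas L_nonneg smooth kernel unbiased unimod symm sigma_nonneg variance]
  have Phi_nn: "\<Phi> x \<ge> 0" for x
    unfolding \<Phi>_def using sigma_nonneg[of x] by (intro add_nonneg_nonneg sum_nonneg) auto
  have main: "ennreal (1 / real K) * (\<Sum>k<K. \<integral>\<^sup>+ x. ennreal (\<Phi> x) \<partial>signsgd_dist Q \<gamma> x0 k)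
           \<le> ennreal (5 * sqrt (d * Lbar * (f x0 - fstar) / real K))"
  proof (cases "\<Lambda> = 0")
    case True
    have Phi0: "\<Phi> x = 0" for x
    proof (rule ccontr)
      assume "\<Phi> x \<noteq> 0"
      then have Pp: "\<Phi> x > 0" using Phi_nn[of x] by simp
      define g' where "g' = 3 * (f x - fstar + 1) / \<Phi> x"
      have g'p: "g' > 0" using Pp lower[of x] by (simp add: g'_def)
      have "ennreal (g' / 3 * \<Phi> x) \<le> ennreal (g' / 3 * \<Phi> x) + (\<integral>\<^sup>+ y. ennreal (f y - fstar) \<partial>signsgd_step Q g' x)"
        by (rule add_increasing2) auto
      also have "\<dots> \<le> ennreal (f x - fstar + g'^2 * \<Lambda> / 2)"
        using SB[OF g'p, of x] unfolding \<Phi>_def \<Lambda>_def by simp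
      finally have "g' / 3 * \<Phi> x \<le> f x - fstar" using True lower[of x] by (simp add: ennreal_le_iff)
      moreover have "g' / 3 * \<Phi> x = f x - fstar + 1" using Pp by (simp add: g'_def)
      ultimately show False by simp
    qed
    have "(\<Sum>k<K. \<integral>\<^sup>+ x. ennreal (\<Phi> x) \<partial>signsgd_dist Q \<gamma> x0 k) = 0" by (simp add: Phi0)
    then show ?thesis by simp
  next
    case False
    then have Lp: "\<Lambda> > 0" using Lnn by simp
    have gdef: "\<gamma> = sqrt (2 * D0 / (\<Lambda> * real K))" unfolding \<gamma>_def D0_def dL ..
    have gp: "\<gamma> > 0" unfolding gdef using D0p Lp Kp by simp
    define C where "C = \<gamma>^2 * \<Lambda> / 2"
    have Cnn: "C \<ge> 0" using Lnn by (simp add: C_def)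
    define \<mu> where "\<mu> k = signsgd_dist Q \<gamma> x0 k" for k
    have musp: "\<mu> k \<in> {N. sets N = sets borel \<and> prob_space N}" for k
      unfolding \<mu>_def using dist_space[OF kernel, of \<gamma> x0 k] by (simp only: space_prob_algebra)
    have mup: "prob_space (\<mu> k)" and mus: "sets (\<mu> k) = sets borel" for k using musp[of k] by blast+
    have mQ: "\<And>g :: real^'n \<Rightarrow> 'b::topological_space. g \<in> borel_measurable borel \<Longrightarrow> g \<in> borel_measurable (\<mu> k)" for k
      by (simp only: measurable_cong_sets[OF mus refl])
    have Sk: "signsgd_step Q \<gamma> \<in> borel \<rightarrow>\<^sub>M subprob_algebra borel"
      by (rule measurable_prob_algebraD[OF step_kernel[OF kernel]])
    define B where "B x = (\<integral>\<^sup>+ y. ennreal (f y - fstar) \<partial>signsgd_step Q \<gamma> x)" for x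
    have Bm: "B \<in> borel_measurable borel"
      unfolding B_def[abs_def]
      by (rule measurable_compose[OF Sk nn_integral_measurable_subprob_algebra[OF Dm]])
    have SBx: "ennreal (\<gamma> / 3 * \<Phi> x) + B x \<le> ennreal (f x - fstar + C)" for x
      using SB[OF gp, of x] unfolding \<Phi>_def B_def C_def \<Lambda>_def by simp
    define R where "R x = f x - fstar + C - enn2real (B x)" for x
    have Bfin: "B x = ennreal (enn2real (B x))" for x
    proof -
      have "B x \<le> ennreal (\<gamma> / 3 * \<Phi> x) + B x" by (rule add_increasing) auto
      then have "B x \<le> ennreal (f x - fstar + C)" using SBx[of x] by (rule order_trans)
      then have "B x < top" using order_le_less_trans by fastforce
      then show ?thesis by simp
    qed
    have RPhi: "\<gamma> / 3 * \<Phi> x \<le> R x" for x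
    proof -
      have "ennreal (\<gamma> / 3 * \<Phi> x + enn2real (B x)) = ennreal (\<gamma> / 3 * \<Phi> x) + B x"
        using gp Phi_nn[of x] by (subst Bfin[of x]) (simp add: ennreal_plus)
      then have "ennreal (\<gamma> / 3 * \<Phi> x + enn2real (B x)) \<le> ennreal (f x - fstar + C)" using SBx[of x] by simp
      moreover have nn: "0 \<le> f x - fstar + C" using lower[of x] Cnn by simp
      ultimately have "\<gamma> / 3 * \<Phi> x + enn2real (B x) \<le> f x - fstar + C"
        using ennreal_le_iff[OF nn] by blast
      then show ?thesis by (simp add: R_def)
    qed
    have Rnn: "R x \<ge> 0" for x
    proof -
      have "\<gamma> / 3 * \<Phi> x \<ge> 0" using gp Phi_nn[of x] by simp
      then show ?thesis using RPhi[of x] by linarith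
    qed
    have RB: "ennreal (R x) + B x = ennreal (f x - fstar) + ennreal C" for x
    proof -
      have "ennreal (R x) + B x = ennreal (R x + enn2real (B x))"
        using Rnn[of x] by (subst Bfin[of x]) (simp add: ennreal_plus)
      also have "R x + enn2real (B x) = (f x - fstar) + C" by (simp add: R_def)
      also have "ennreal \<dots> = ennreal (f x - fstar) + ennreal C" using lower[of x] Cnn by (simp add: ennreal_plus)
      finally show ?thesis .
    qed
    have Rm: "R \<in> borel_measurable borel"
      unfolding R_def[abs_def] using fmeas Bm by measurable
    have Rm': "(\<lambda>x. ennreal (R x)) \<in> borel_measurable borel" using Rm by measurable
    define e where "e k = (\<integral>\<^sup>+ x. ennreal (f x - fstar) \<partial>\<mu> k)" for k
    define a where "a k = (\<integral>\<^sup>+ x. ennreal (R x) \<partial>\<mu> k)" for k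
    have step_eq: "a k + e (Suc k) = e k + ennreal C" for k
    proof -
      have Skk: "signsgd_step Q \<gamma> \<in> \<mu> k \<rightarrow>\<^sub>M subprob_algebra borel"
        using Sk by (simp only: measurable_cong_sets[OF mus refl])
      have eS: "e (Suc k) = (\<integral>\<^sup>+ x. B x \<partial>\<mu> k)"
        unfolding e_def B_def \<mu>_def signsgd_dist.simps
        using nn_integral_bind[OF Dm Skk[unfolded \<mu>_def]] by simp
      have "a k + e (Suc k) = (\<integral>\<^sup>+ x. ennreal (R x) + B x \<partial>\<mu> k)"
        unfolding a_def eS by (rule nn_integral_add[symmetric]) (auto intro!: mQ Rm' Bm)
      also have "\<dots> = (\<integral>\<^sup>+ x. ennreal (f x - fstar) + ennreal C \<partial>\<mu> k)" by (simp add: RB)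
      also have "\<dots> = e k + (\<integral>\<^sup>+ x. ennreal C \<partial>\<mu> k)"
        unfolding e_def by (rule nn_integral_add) (auto intro!: mQ Dm)
      also have "(\<integral>\<^sup>+ x. ennreal C \<partial>\<mu> k) = ennreal C"
        using prob_space.emeasure_space_1[OF mup[of k]] by simp
      finally show ?thesis .
    qed
    have e0: "e 0 = ennreal D0"
      unfolding e_def \<mu>_def D0_def signsgd_dist.simps by (rule nn_integral_return) (auto intro: Dm)
    have telesc: "(\<Sum>k<n. a k) + e n = ennreal (D0 + real n * C)" for n
    proof (induction n)
      case 0
      then show ?case using e0 by simp
    next
      case (Suc n)
      have "(\<Sum>k<Suc n. a k) + e (Suc n) = (\<Sum>k<n. a k) + (a n + e (Suc n))" by (simp add: add.assoc)
      also have "\<dots> = ((\<Sum>k<n. a k) + e n) + ennreal C" unfolding step_eq by (simp only: add.assoc)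
      also have "\<dots> = ennreal (D0 + real n * C) + ennreal C" by (simp add: Suc)
      also have "\<dots> = ennreal (D0 + real n * C + C)" using D0p Cnn by (intro ennreal_plus[symmetric]) auto
      also have "D0 + real n * C + C = D0 + real (Suc n) * C" by (simp add: algebra_simps)
      finally show ?case .
    qed
    have sum_a: "(\<Sum>k<K. a k) \<le> ennreal (D0 + real K * C)"
      using telesc[of K] by (metis add_increasing2 order_refl zero_le)
    have Phi_le: "(\<integral>\<^sup>+ x. ennreal (\<Phi> x) \<partial>\<mu> k) \<le> ennreal (3 / \<gamma>) * a k" for k
    proof -
      have "(\<integral>\<^sup>+ x. ennreal (\<Phi> x) \<partial>\<mu> k) \<le> (\<integral>\<^sup>+ x. ennreal (3 / \<gamma>) * ennreal (R x) \<partial>\<mu> k)"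
      proof (rule nn_integral_mono)
        fix x
        have "\<Phi> x \<le> 3 / \<gamma> * R x" using RPhi[of x] gp by (simp add: field_simps)
        then have "ennreal (\<Phi> x) \<le> ennreal (3 / \<gamma> * R x)" by (rule ennreal_leI)
        also have "\<dots> = ennreal (3 / \<gamma>) * ennreal (R x)" using gp Rnn[of x] by (intro ennreal_mult) auto
        finally show "ennreal (\<Phi> x) \<le> ennreal (3 / \<gamma>) * ennreal (R x)" .
      qed
      also have "\<dots> = ennreal (3 / \<gamma>) * a k"
        unfolding a_def by (rule nn_integral_cmult) (auto intro!: mQ Rm')
      finally show ?thesis .
    qed
    have "ennreal (1 / real K) * (\<Sum>k<K. \<integral>\<^sup>+ x. ennreal (\<Phi> x) \<partial>signsgd_dist Q \<gamma> x0 k)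
        \<le> ennreal (1 / real K) * (\<Sum>k<K. ennreal (3 / \<gamma>) * a k)"
      unfolding \<mu>_def[symmetric] by (intro mult_left_mono sum_mono Phi_le) auto
    also have "\<dots> = ennreal (1 / real K) * ennreal (3 / \<gamma>) * (\<Sum>k<K. a k)"
      by (simp add: sum_distrib_left mult.assoc)
    also have "\<dots> \<le> ennreal (1 / real K) * ennreal (3 / \<gamma>) * ennreal (D0 + real K * C)"
      by (intro mult_left_mono sum_a) auto
    also have "\<dots> = ennreal ((1 / real K) * (3 / \<gamma>) * (D0 + real K * C))"
    proof -
      have e1: "ennreal (1 / real K) * ennreal (3 / \<gamma>) = ennreal (1 / real K * (3 / \<gamma>))"
        using Kp gp by (intro ennreal_mult[symmetric]) auto
      have e2: "ennreal (1 / real K * (3 / \<gamma>)) * ennreal (D0 + real K * C) = ennreal (1 / real K * (3 / \<gamma>) * (D0 + real K * C))"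
        using Kp gp D0p Cnn by (intro ennreal_mult[symmetric]) auto
      show ?thesis unfolding e1 e2 ..
    qed
    also have "\<dots> \<le> ennreal (5 * sqrt (\<Lambda> * D0 / real K))"
      by (rule ennreal_leI) (unfold C_def, rule final_arith[OF D0p Lp Kp gdef])
    finally show ?thesis unfolding dL D0_def by simp
  qed
  show ?thesis unfolding Let_def
    using main unfolding d_def Lbar_def \<gamma>_def \<Phi>_def \<Lambda>_def by simp
qed


end
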